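(* Let $\Gamma$ be a group of compactly supported homeomorphisms of $\mathbb{R}$ that contains $F'$, with $F$ and $F'$ as in the context. Then the commutator subgroup $\Gamma'$ is simple.
   Context: $F$ denotes the group of homeomorphisms of $\mathbb{R}$ generated by the following two maps: - $a(t)=t+1$; - $b$, where $b(t)=t$ for $t\le 0$, $b(t)=t/(1-t)$ for $0\le t\le 1/2$, $b(t)=(3t-1)/t$ for $1/2\le t\le 1$, and $b(t)=t+1$ for $t\ge 1$. This $F$ is a copy of Thompson's group $F$ acting on the real line, and $F'$ is its commutator subgroup. *)

theory Defs
  imports "HOL-Analysis.Analysis" "HOL-Algebra.Algebra"
begin

definition Homeo :: "(real \<Rightarrow> real) monoid" where
  "Homeo = \<lparr>carrier = {f. \<exists>g. homeomorphism UNIV UNIV f g}, mult = (\<circ>), one = id\<rparr>"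

definition compactly_supported :: "(real \<Rightarrow> real) \<Rightarrow> bool" where
  "compactly_supported f \<longleftrightarrow> compact (closure {x. f x \<noteq> x})"

definition gen_a :: "real \<Rightarrow> real" where
  "gen_a t = t + 1"

definition gen_b :: "real \<Rightarrow> real" where
  "gen_b t = (if t \<le> 0 then t
              else if t \<le> 1/2 then t / (1 - t)
              else if t \<le> 1 then (3 * t - 1) / t
              else t + 1)"

definition ThompsonF :: "(real \<Rightarrow> real) set" where
  "ThompsonF = generate Homeo {gen_a, gen_b}"

definition ThompsonF' :: "(real \<Rightarrow> real) set" where
  "ThompsonF' = derived Homeo ThompsonF"

text \<open>Simplicity of a (possibly infinite) group: nontrivial, and its only normal
  subgroups are the trivial one and the whole group.  (The library's simple_group
  requires finite order, so it is unsuitable for infinite groups.)\<close>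
definition simple :: "('a, 'b) monoid_scheme \<Rightarrow> bool" where
  "simple G \<longleftrightarrow> group G \<and> carrier G \<noteq> {\<one>\<^bsub>G\<^esub>} \<and>
     (\<forall>N. N \<lhd> G \<longrightarrow> N = {\<one>\<^bsub>G\<^esub>} \<or> N = carrier G)"

end

theory Submission imports Defs begin

lemma Homeo_carrier: "f \<in> carrier Homeo \<longleftrightarrow> (\<exists>g. homeomorphism UNIV UNIV f g)"
  by (simp add: Homeo_def)
lemma Homeo_mult[simp]: "f \<otimes>\<^bsub>Homeo\<^esub> g = f \<circ> g"
  by (simp add: Homeo_def)
lemma Homeo_one[simp]: "\<one>\<^bsub>Homeo\<^esub> = id"
  by (simp add: Homeo_def)

lemma group_Homeo: "group Homeo"
proof (rule groupI)
  fix x y assume "x \<in> carrier Homeo" "y \<in> carrier Homeo"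
  then show "x \<otimes>\<^bsub>Homeo\<^esub> y \<in> carrier Homeo"
    unfolding Homeo_carrier Homeo_mult using homeomorphism_compose by blast
next
  show "\<one>\<^bsub>Homeo\<^esub> \<in> carrier Homeo" unfolding Homeo_carrier Homeo_one
    using homeomorphism_ident[of UNIV] by (auto simp: id_def)
next
  fix x y z show "x \<otimes>\<^bsub>Homeo\<^esub> y \<otimes>\<^bsub>Homeo\<^esub> z = x \<otimes>\<^bsub>Homeo\<^esub> (y \<otimes>\<^bsub>Homeo\<^esub> z)"
    by (simp add: o_assoc)
next
  fix x show "\<one>\<^bsub>Homeo\<^esub> \<otimes>\<^bsub>Homeo\<^esub> x = x" by simp
next
  fix x assume "x \<in> carrier Homeo"
  then obtain g where g: "homeomorphism UNIV UNIV x g" unfolding Homeo_carrier by blast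
  then have "g \<in> carrier Homeo" unfolding Homeo_carrier using homeomorphism_symD by blast
  moreover have "g \<circ> x = id" using g unfolding homeomorphism_def by auto
  ultimately show "\<exists>y\<in>carrier Homeo. y \<otimes>\<^bsub>Homeo\<^esub> x = \<one>\<^bsub>Homeo\<^esub>" by auto
qed

interpretation H: group Homeo by (rule group_Homeo)

abbreviation hinv :: "(real \<Rightarrow> real) \<Rightarrow> real \<Rightarrow> real" where "hinv f \<equiv> inv\<^bsub>Homeo\<^esub> f"

lemma Homeo_inv_apply1[simp]: "f \<in> carrier Homeo \<Longrightarrow> hinv f (f t) = t"
  using H.l_inv[of f] by (metis Homeo_mult Homeo_one comp_apply id_apply)
lemma Homeo_inv_apply2[simp]: "f \<in> carrier Homeo \<Longrightarrow> f (hinv f t) = t"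
  using H.r_inv[of f] by (metis Homeo_mult Homeo_one comp_apply id_apply)
lemma Homeo_cont: "f \<in> carrier Homeo \<Longrightarrow> continuous_on UNIV f"
  unfolding Homeo_carrier homeomorphism_def by auto
lemma Homeo_inj: "f \<in> carrier Homeo \<Longrightarrow> f s = f t \<Longrightarrow> s = t"
  by (metis Homeo_inv_apply1)
lemma Homeo_inv_eq: "f \<in> carrier Homeo \<Longrightarrow> hinv f t = s \<longleftrightarrow> f s = t"
  by (metis Homeo_inv_apply1 Homeo_inv_apply2)

definition binv :: "real \<Rightarrow> real" where
  "binv s = (if s \<le> 0 then s else if s \<le> 1 then s / (1 + s) else if s \<le> 2 then 1 / (3 - s) else s - 1)"

lemma gen_b_mid: "1/2 < x \<Longrightarrow> x \<le> 1 \<Longrightarrow> gen_b x = (3*x-1)/x"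
  by (simp add: gen_b_def)
lemma gen_b_low: "0 < x \<Longrightarrow> x \<le> 1/2 \<Longrightarrow> gen_b x = x/(1-x)"
  by (simp add: gen_b_def)

lemma b_binv: "gen_b (binv s) = s"
proof -
  consider "s \<le> 0" | "0 < s" "s \<le> 1" | "1 < s" "s \<le> 2" | "2 < s" by linarith
  then show ?thesis
  proof cases
    case 1 then show ?thesis by (simp add: gen_b_def binv_def)
  next
    case 2
    have x: "binv s = s / (1 + s)" using 2 by (simp add: binv_def)
    have "s / (1 + s) \<le> 1/2" "0 < s / (1 + s)" using 2 by (auto simp: field_simps)
    then have "gen_b (binv s) = (s / (1 + s)) / (1 - s / (1 + s))" by (simp add: gen_b_low x)
    also have "\<dots> = s" using 2 by (simp add: field_simps)
    finally show ?thesis .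
  next
    case 3
    have x: "binv s = 1 / (3 - s)" using 3 by (simp add: binv_def)
    have "1 / (3 - s) > 1/2" "1 / (3 - s) \<le> 1" using 3 by (auto simp: field_simps)
    then have "gen_b (binv s) = (3 * (1 / (3 - s)) - 1) / (1 / (3 - s))" unfolding x by (rule gen_b_mid)
    also have "\<dots> = s" using 3 by (simp add: field_simps)
    finally show ?thesis .
  next
    case 4 then show ?thesis by (simp add: gen_b_def binv_def)
  qed
qed

lemma binv_b: "binv (gen_b t) = t"
  unfolding gen_b_def binv_def by (auto simp: field_simps)

lemma cont_b: "continuous_on UNIV gen_b"
  unfolding gen_b_def
  apply (rule continuous_on_cases_1)
    apply (rule continuous_intros)
   apply (rule continuous_on_cases_1)
     apply (auto intro!: continuous_intros)[1]
    apply (rule continuous_on_cases_1)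
      apply (auto intro!: continuous_intros)[2]
  apply auto
  done

lemma cont_binv: "continuous_on UNIV binv"
  unfolding binv_def
  apply (rule continuous_on_cases_1)
    apply (rule continuous_intros)
   apply (rule continuous_on_cases_1)
     apply (auto intro!: continuous_intros)[1]
    apply (rule continuous_on_cases_1)
      apply (auto intro!: continuous_intros)[2]
  apply auto
  done

lemma homeo_b: "homeomorphism UNIV UNIV gen_b binv"
  unfolding homeomorphism_def using cont_b cont_binv b_binv binv_b
  by (metis UNIV_I UNIV_eq_I image_eqI)

lemma b_carrier: "gen_b \<in> carrier Homeo"
  using homeo_b Homeo_carrier by blast

lemma binv_carrier: "binv \<in> carrier Homeo"
  using homeo_b Homeo_carrier homeomorphism_symD by blast

lemma hinv_b: "hinv gen_b = binv"
proof -
  have "binv \<otimes>\<^bsub>Homeo\<^esub> gen_b = \<one>\<^bsub>Homeo\<^esub>" using binv_b by (auto simp: fun_eq_iff)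
  then show ?thesis using H.inv_equality b_carrier binv_carrier by blast
qed

definition tr :: "real \<Rightarrow> real \<Rightarrow> real" where "tr c t = t + c"

lemma homeo_tr: "homeomorphism UNIV UNIV (tr c) (tr (-c))"
  unfolding homeomorphism_def tr_def
  by (auto intro!: continuous_intros simp: image_iff)

lemma tr_carrier: "tr c \<in> carrier Homeo"
  using homeo_tr Homeo_carrier by blast

lemma hinv_tr: "hinv (tr c) = tr (-c)"
proof -
  have "tr (-c) \<otimes>\<^bsub>Homeo\<^esub> tr c = \<one>\<^bsub>Homeo\<^esub>" by (auto simp: fun_eq_iff tr_def)
  then show ?thesis using H.inv_equality tr_carrier by blast
qed

lemma a_tr: "gen_a = tr 1" by (auto simp: fun_eq_iff gen_a_def tr_def)

lemma gens_carrier: "{gen_a, gen_b} \<subseteq> carrier Homeo"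
  using b_carrier tr_carrier[of 1] unfolding a_tr by blast

lemma F_sub: "subgroup ThompsonF Homeo"
  unfolding ThompsonF_def by (rule H.generate_is_subgroup[OF gens_carrier])

lemma F_carrier: "f \<in> ThompsonF \<Longrightarrow> f \<in> carrier Homeo"
  by (rule subgroup.mem_carrier[OF F_sub])

lemma F_comp: "f \<in> ThompsonF \<Longrightarrow> g \<in> ThompsonF \<Longrightarrow> f \<circ> g \<in> ThompsonF"
  using subgroup.m_closed[OF F_sub, of f g] by simp

lemma F_inv: "f \<in> ThompsonF \<Longrightarrow> hinv f \<in> ThompsonF"
  using subgroup.m_inv_closed[OF F_sub] by blast

lemma a_F: "gen_a \<in> ThompsonF" unfolding ThompsonF_def by (rule generate.incl) simp
lemma b_F: "gen_b \<in> ThompsonF" unfolding ThompsonF_def by (rule generate.incl) simp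
lemma binv_F: "binv \<in> ThompsonF" using F_inv[OF b_F] hinv_b by simp
lemma trm1_F: "tr (-1) \<in> ThompsonF"
proof -
  have "hinv (tr 1) \<in> ThompsonF" using F_inv[OF a_F] a_tr by simp
  then show ?thesis by (simp add: hinv_tr)
qed

lemma tr_nat_F: "tr (real n) \<in> ThompsonF \<and> tr (- real n) \<in> ThompsonF"
proof (induction n)
  case 0
  have "tr 0 = id" by (auto simp: fun_eq_iff tr_def)
  moreover have "\<one>\<^bsub>Homeo\<^esub> \<in> ThompsonF" using subgroup.one_closed[OF F_sub] .
  ultimately have "tr 0 \<in> ThompsonF" by simp
  then show ?case by simp
next
  case (Suc n)
  have e: "tr (real (Suc n)) = tr 1 \<circ> tr (real n)" "tr (- real (Suc n)) = tr (-1) \<circ> tr (- real n)"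
    by (auto simp: fun_eq_iff tr_def)
  have "tr 1 \<in> ThompsonF" using a_F a_tr by simp
  then show ?case unfolding e using Suc trm1_F F_comp[of "tr 1" "tr (real n)"] F_comp[of "tr (-1)" "tr (- real n)"] by blast
qed

lemma tr_int_F: "tr (of_int m) \<in> ThompsonF"
proof (cases "m \<ge> 0")
  case True
  then have eq: "(of_int m :: real) = real (nat m)" by simp
  show ?thesis unfolding eq by (rule conjunct1[OF tr_nat_F])
next
  case False
  then have eq: "(of_int m :: real) = - real (nat (-m))" by simp
  show ?thesis unfolding eq by (rule conjunct2[OF tr_nat_F])
qed

lemma F'_sub: "subgroup ThompsonF' Homeo"
  unfolding ThompsonF'_def using H.derived_is_subgroup F_sub subgroup.subset by blast

lemma F'_comp: "f \<in> ThompsonF' \<Longrightarrow> g \<in> ThompsonF' \<Longrightarrow> f \<circ> g \<in> ThompsonF'"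
  using subgroup.m_closed[OF F'_sub, of f g] by simp

lemma comm_F': assumes x: "x \<in> ThompsonF" and y: "y \<in> ThompsonF" shows "x \<circ> y \<circ> hinv x \<circ> hinv y \<in> ThompsonF'"
  unfolding ThompsonF'_def derived_def
  apply (rule generate.incl)
  apply (rule UN_I[OF x], rule UN_I[OF y])
  by simp

definition realizable :: "(real \<Rightarrow> real) \<Rightarrow> bool" where
  "realizable f \<longleftrightarrow> (\<forall>p q. \<exists>h\<in>ThompsonF'. \<forall>t\<in>{p..q}. h t = f t)"

lemma hinv_fix: "f \<in> carrier Homeo \<Longrightarrow> f t = t \<Longrightarrow> hinv f t = t"
  using Homeo_inv_eq by blast

lemma realizable_half:
  assumes x: "x \<in> ThompsonF" and fx: "(\<exists>c. \<forall>t\<ge>c. x t = t) \<or> (\<exists>c. \<forall>t\<le>c. x t = t)"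
  shows "realizable x"
  unfolding realizable_def
proof (intro allI)
  fix p q :: real
  have xc: "x \<in> carrier Homeo" using x F_carrier by blast
  obtain m :: int where m: "\<forall>t\<in>{p..q}. x (t + of_int m) = t + of_int m"
  proof (cases "\<exists>c. \<forall>t\<ge>c. x t = t")
    case True
    then obtain c where c: "\<forall>t\<ge>c. x t = t" by blast
    have "\<forall>t\<in>{p..q}. x (t + of_int \<lceil>c - p\<rceil>) = t + of_int \<lceil>c - p\<rceil>"
    proof
      fix t assume "t \<in> {p..q}"
      then have "t + of_int \<lceil>c - p\<rceil> \<ge> c" by (auto, linarith)
      then show "x (t + of_int \<lceil>c - p\<rceil>) = t + of_int \<lceil>c - p\<rceil>" using c by blast
    qed
    then show ?thesis using that by blast
  next
    case False
    then obtain c where c: "\<forall>t\<le>c. x t = t" using fx by blast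
    have "\<forall>t\<in>{p..q}. x (t + of_int \<lfloor>c - q\<rfloor>) = t + of_int \<lfloor>c - q\<rfloor>"
    proof
      fix t assume "t \<in> {p..q}"
      then have "t + of_int \<lfloor>c - q\<rfloor> \<le> c" by (auto, linarith)
      then show "x (t + of_int \<lfloor>c - q\<rfloor>) = t + of_int \<lfloor>c - q\<rfloor>" using c by blast
    qed
    then show ?thesis using that by blast
  qed
  define y where "y = tr (- of_int m)"
  have yF: "y \<in> ThompsonF" unfolding y_def using tr_int_F[of "-m"] by simp
  have hy: "hinv y = tr (of_int m)" unfolding y_def hinv_tr by simp
  have "x \<circ> y \<circ> hinv x \<circ> hinv y \<in> ThompsonF'" using comm_F'[OF x yF] .
  moreover have "\<forall>t\<in>{p..q}. (x \<circ> y \<circ> hinv x \<circ> hinv y) t = x t"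
  proof
    fix t assume t: "t \<in> {p..q}"
    have "hinv x (t + of_int m) = t + of_int m" using hinv_fix[OF xc] m t by blast
    then show "(x \<circ> y \<circ> hinv x \<circ> hinv y) t = x t" unfolding comp_apply hy by (simp add: y_def tr_def)
  qed
  ultimately show "\<exists>h\<in>ThompsonF'. \<forall>t\<in>{p..q}. h t = x t" by blast
qed

lemma realizable_comp:
  assumes "g \<in> carrier Homeo" "realizable f" "realizable g"
  shows "realizable (f \<circ> g)"
  unfolding realizable_def
proof (intro allI)
  fix p q :: real
  obtain hg where hg: "hg \<in> ThompsonF'" "\<forall>t\<in>{p..q}. hg t = g t" using assms(3) realizable_def by blast
  have "compact (g ` {p..q})"
    using compact_continuous_image continuous_on_subset[OF Homeo_cont[OF assms(1)]] by blast
  then obtain B where B: "\<forall>s\<in>g ` {p..q}. \<bar>s\<bar> \<le> B" using compact_imp_bounded bounded_real by meson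
  obtain hf where hf: "hf \<in> ThompsonF'" "\<forall>t\<in>{-B..B}. hf t = f t" using assms(2) realizable_def by blast
  have "hf \<circ> hg \<in> ThompsonF'" using F'_comp hf hg by blast
  moreover have "\<forall>t\<in>{p..q}. (hf \<circ> hg) t = (f \<circ> g) t"
  proof
    fix t assume t: "t \<in> {p..q}"
    then have "\<bar>g t\<bar> \<le> B" using B by blast
    then have "g t \<in> {-B..B}" by (simp add: abs_le_iff)
    then show "(hf \<circ> hg) t = (f \<circ> g) t" using hf(2) hg(2) t by simp
  qed
  ultimately show "\<exists>h\<in>ThompsonF'. \<forall>t\<in>{p..q}. h t = (f \<circ> g) t" by blast
qed

lemma gen_b_left: "t \<le> 0 \<Longrightarrow> gen_b t = t" by (simp add: gen_b_def)
lemma gen_b_right: "t > 1 \<Longrightarrow> gen_b t = t + 1" by (simp add: gen_b_def)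
lemma binv_left: "t \<le> 0 \<Longrightarrow> binv t = t" by (simp add: binv_def)

lemma realizable_b: "realizable gen_b"
  by (rule realizable_half[OF b_F]) (use gen_b_left in blast)

lemma realizable_binv: "realizable binv"
  by (rule realizable_half[OF binv_F]) (use binv_left in blast)

definition BM :: "int \<Rightarrow> real \<Rightarrow> real" where
  "BM M = tr (of_int M) \<circ> gen_b \<circ> tr (- of_int M)"

lemma BM_F: "BM M \<in> ThompsonF"
  unfolding BM_def using F_comp tr_int_F[of M] tr_int_F[of "-M"] b_F by simp

lemma BM_left: "t \<le> of_int M \<Longrightarrow> BM M t = t"
  by (simp add: BM_def tr_def gen_b_left)

lemma BM_right: "t > of_int M + 1 \<Longrightarrow> BM M t = t + 1"
  by (simp add: BM_def tr_def gen_b_right)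

lemma realizable_from:
  assumes "\<And>p q. \<exists>x. realizable x \<and> (\<forall>t\<in>{p..q}. x t = f t)"
  shows "realizable f"
  unfolding realizable_def
proof (intro allI)
  fix p q :: real
  obtain x where x: "realizable x" "\<forall>t\<in>{p..q}. x t = f t" using assms by blast
  then obtain h where "h \<in> ThompsonF'" "\<forall>t\<in>{p..q}. h t = x t" unfolding realizable_def by blast
  then show "\<exists>h\<in>ThompsonF'. \<forall>t\<in>{p..q}. h t = f t" using x by auto
qed

lemma realizable_a: "realizable gen_a"
proof (rule realizable_from)
  fix p q :: real
  define M where "M = \<lceil>q\<rceil> + 1"
  define x where "x = hinv (BM M) \<circ> gen_a"
  have BMc: "BM M \<in> carrier Homeo" using BM_F F_carrier by blast
  have xF: "x \<in> ThompsonF" unfolding x_def using F_comp F_inv BM_F a_F by blast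
  have "\<forall>t\<ge>of_int M + 2. x t = t"
  proof (intro allI impI)
    fix t :: real assume "t \<ge> of_int M + 2"
    then have "BM M t = t + 1" using BM_right by simp
    then show "x t = t" unfolding x_def using Homeo_inv_eq[OF BMc] by (simp add: gen_a_def)
  qed
  then have "realizable x" using realizable_half[OF xF] by blast
  moreover have "\<forall>t\<in>{p..q}. x t = gen_a t"
  proof
    fix t assume "t \<in> {p..q}"
    then have "t + 1 \<le> of_int M" unfolding M_def by (simp, linarith)
    then have "BM M (t + 1) = t + 1" using BM_left by simp
    then show "x t = gen_a t" unfolding x_def using Homeo_inv_eq[OF BMc] by (simp add: gen_a_def)
  qed
  ultimately show "\<exists>x. realizable x \<and> (\<forall>t\<in>{p..q}. x t = gen_a t)" by blast
qed

lemma realizable_trm1: "realizable (tr (-1))"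
proof (rule realizable_from)
  fix p q :: real
  define M where "M = \<lceil>q\<rceil>"
  define x where "x = tr (-1) \<circ> BM M"
  have xF: "x \<in> ThompsonF" unfolding x_def using F_comp trm1_F BM_F by blast
  have "\<forall>t\<ge>of_int M + 2. x t = t"
    using BM_right by (simp add: x_def tr_def)
  then have "realizable x" using realizable_half[OF xF] by blast
  moreover have "\<forall>t\<in>{p..q}. x t = tr (-1) t"
  proof
    fix t assume "t \<in> {p..q}"
    then have "t \<le> of_int M" unfolding M_def by (simp, linarith)
    then show "x t = tr (-1) t" using BM_left by (simp add: x_def)
  qed
  ultimately show "\<exists>x. realizable x \<and> (\<forall>t\<in>{p..q}. x t = tr (-1) t)" by blast
qed

lemma realizable_id: "realizable id"
  unfolding realizable_def using subgroup.one_closed[OF F'_sub, unfolded Homeo_one] by blast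

lemma realizable_F: "f \<in> ThompsonF \<Longrightarrow> realizable f"
proof -
  assume "f \<in> ThompsonF"
  then have "f \<in> generate Homeo {gen_a, gen_b}" unfolding ThompsonF_def .
  then show ?thesis
  proof (induction rule: generate.induct)
    case one show ?case unfolding Homeo_one by (rule realizable_id)
  next
    case (incl h) then show ?case using realizable_a realizable_b by blast
  next
    case (inv h)
    have "hinv gen_a = tr (-1)" by (simp add: a_tr hinv_tr)
    then show ?case using inv realizable_trm1 realizable_binv hinv_b by auto
  next
    case (eng h1 h2)
    have "h2 \<in> carrier Homeo" using eng(2) F_carrier unfolding ThompsonF_def by blast
    then show ?case unfolding Homeo_mult using realizable_comp eng by blast
  qed
qed

lemma orbit_rat: "0 < (q::int) \<Longrightarrow> \<exists>g\<in>ThompsonF. g 0 = of_int p / of_int q"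
proof (induction "nat q" arbitrary: p q rule: less_induct)
  case less
  define k where "k = p div q"
  define r where "r = p mod q"
  have pe: "p = k * q + r" unfolding k_def r_def by simp
  have r0: "0 \<le> r" "r < q" unfolding r_def using less.prems by auto
  have qpos: "(0::real) < of_int q" using less.prems by simp
  have xe: "(of_int p / of_int q :: real) = of_int k + of_int r / of_int q"
    using qpos by (simp add: pe field_simps)
  define y where "y = (of_int r / of_int q :: real)"
  consider "r = 0" | "0 < r" "2 * r \<le> q" | "0 < r" "2 * r > q" using r0 by linarith
  then show ?case
  proof cases
    case 1
    have "tr (of_int k) 0 = of_int p / of_int q" using xe 1 by (simp add: tr_def)
    then show ?thesis using tr_int_F by blast
  next
    case 2
    have y1: "0 < y" "y \<le> 1/2" unfolding y_def using 2 qpos by (auto simp: field_simps)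
    have "gen_b y = y / (1 - y)" using gen_b_low[OF y1] .
    also have "\<dots> = of_int r / of_int (q - r)" unfolding y_def using 2 qpos r0
      by (simp add: field_simps)
    finally have gy: "gen_b y = of_int r / of_int (q - r)" .
    have "nat (q - r) < nat q" "0 < q - r" using 2 r0 by auto
    then obtain g' where g': "g' \<in> ThompsonF" "g' 0 = of_int r / of_int (q - r)"
      using less.hyps by blast
    define g where "g = tr (of_int k) \<circ> binv \<circ> g'"
    have "g \<in> ThompsonF" unfolding g_def using F_comp tr_int_F binv_F g'(1) by blast
    moreover have "g 0 = of_int p / of_int q"
      unfolding g_def using g'(2) gy binv_b[of y] xe by (simp add: tr_def y_def)
    ultimately show ?thesis by blast
  next
    case 3
    have y1: "1/2 < y" "y \<le> 1" unfolding y_def using 3 r0 qpos by (auto simp: field_simps)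
    have "gen_b y = (3 * y - 1) / y" using gen_b_mid[OF y1] .
    also have "\<dots> = of_int (3 * r - q) / of_int r" unfolding y_def using 3 qpos r0
      by (simp add: field_simps)
    finally have gy: "gen_b y = of_int (3 * r - q) / of_int r" .
    have "nat r < nat q" "0 < r" using 3 r0 by auto
    then obtain g' where g': "g' \<in> ThompsonF" "g' 0 = of_int (3 * r - q) / of_int r"
      using less.hyps by blast
    define g where "g = tr (of_int k) \<circ> binv \<circ> g'"
    have "g \<in> ThompsonF" unfolding g_def using F_comp tr_int_F binv_F g'(1) by blast
    moreover have "g 0 = of_int p / of_int q"
      unfolding g_def using g'(2) gy binv_b[of y] xe by (simp add: tr_def y_def)
    ultimately show ?thesis by blast
  qed
qed

lemma orbit_dense: "c < d \<Longrightarrow> \<exists>g\<in>ThompsonF. c < g 0 \<and> g 0 < d"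
proof -
  assume "c < d"
  then obtain r where r: "r \<in> \<rat>" "c < r" "r < d" using Rats_dense_in_real by blast
  then obtain a b where ab: "b > 0" "r = of_int a / of_int b" by (metis Rats_cases')
  then obtain g where "g \<in> ThompsonF" "g 0 = r" using orbit_rat by blast
  then show ?thesis using r by blast
qed

lemma binv_nonneg: "0 \<le> t \<Longrightarrow> 0 \<le> binv t"
  by (simp add: binv_def)

lemma binv_le: "0 \<le> t \<Longrightarrow> binv t \<le> max 1 (t - 1)"
  by (auto simp: binv_def field_simps)

lemma binv_01: "0 \<le> s \<Longrightarrow> s \<le> 1 \<Longrightarrow> binv s = s / (1 + s)"
  by (auto simp: binv_def)

lemma iter1: "0 \<le> t \<Longrightarrow> t \<le> real k + 1 \<Longrightarrow> 0 \<le> (binv ^^ k) t \<and> (binv ^^ k) t \<le> 1"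
proof (induction k arbitrary: t)
  case 0 then show ?case by simp
next
  case (Suc k)
  have "0 \<le> binv t" "binv t \<le> real k + 1"
    using binv_nonneg[OF Suc.prems(1)] binv_le[OF Suc.prems(1)] Suc.prems(2) by auto
  then have "0 \<le> (binv ^^ k) (binv t) \<and> (binv ^^ k) (binv t) \<le> 1" using Suc.IH by blast
  then show ?case by (simp add: funpow_Suc_right del: funpow.simps)
qed

lemma iter2: "0 \<le> t \<Longrightarrow> t \<le> 1 \<Longrightarrow> (binv ^^ n) t = t / (1 + real n * t)"
proof (induction n)
  case 0 then show ?case by simp
next
  case (Suc n)
  define s where "s = t / (1 + real n * t)"
  have nt: "0 \<le> real n * t" using Suc.prems by simp
  have d: "1 + real n * t \<ge> 1" using nt by simp
  have tt: "t \<le> 1 + real n * t" using nt Suc.prems by linarith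
  have s01: "0 \<le> s" "s \<le> 1" unfolding s_def using d tt Suc.prems by (auto simp: divide_le_eq)
  have "(binv ^^ Suc n) t = binv s" using Suc s_def by simp
  also have "\<dots> = s / (1 + s)" using binv_01[OF s01] .
  also have "\<dots> = t / (1 + real n * t + t)"
  proof -
    have D: "1 + real n * t \<noteq> 0" "1 + real n * t + t \<noteq> 0" using nt Suc.prems by linarith+
    have "1 + s = (1 + real n * t + t) / (1 + real n * t)" unfolding s_def using D
      by (simp add: field_simps)
    then show ?thesis unfolding s_def using D by (simp add: divide_simps)
  qed
  also have "\<dots> = t / (1 + real (Suc n) * t)" by (simp add: algebra_simps)
  finally show ?case .
qed

lemma binv_pow_F: "binv ^^ n \<in> ThompsonF"
proof (induction n)
  case 0 show ?case using subgroup.one_closed[OF F_sub, unfolded Homeo_one] by (simp add: id_def)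
next
  case (Suc n) then show ?case unfolding funpow.simps using F_comp binv_F by blast
qed

lemma squeeze_F:
  assumes "c < d"
  shows "\<exists>f\<in>ThompsonF. \<forall>t\<in>{p..q}. c < f t \<and> f t < d"
proof -
  obtain g where g: "g \<in> ThompsonF" "c < g 0" "g 0 < d" using orbit_dense[OF assms] by blast
  define e where "e = min (g 0 - c) (d - g 0)"
  have e: "e > 0" unfolding e_def using g by simp
  obtain \<delta> where \<delta>: "\<delta> > 0" "\<forall>x'. dist x' 0 < \<delta> \<longrightarrow> dist (g x') (g 0) < e"
    using Homeo_cont[OF F_carrier[OF g(1)]] e unfolding continuous_on_iff by blast
  obtain N :: nat where N: "1 / \<delta> < real N" using reals_Archimedean2 by blast
  have Npos: "real N > 0" using N \<delta> by (smt (verit) divide_pos_pos)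
  define m where "m = \<lceil>- p\<rceil>"
  define K where "K = nat \<lceil>q + of_int m\<rceil>"
  define f where "f = g \<circ> (binv ^^ N) \<circ> (binv ^^ K) \<circ> tr (of_int m)"
  have "f \<in> ThompsonF" unfolding f_def using F_comp g(1) binv_pow_F tr_int_F by blast
  moreover have "\<forall>t\<in>{p..q}. c < f t \<and> f t < d"
  proof
    fix t assume t: "t \<in> {p..q}"
    define s where "s = t + of_int m"
    have s0: "0 \<le> s" unfolding s_def m_def using t by (simp, linarith)
    have sK: "s \<le> real K + 1" unfolding s_def K_def using t s0 s_def by (simp, linarith)
    define u where "u = (binv ^^ K) s"
    have u: "0 \<le> u" "u \<le> 1" unfolding u_def using iter1[OF s0 sK] by auto
    define v where "v = (binv ^^ N) u"
    have v: "v = u / (1 + real N * u)" unfolding v_def using iter2[OF u] .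
    have Nu: "0 \<le> real N * u" using u Npos by simp
    have pos: "0 < 1 + real N * u" "0 < 1 + u * real N" using Nu by (auto simp: mult.commute)
    have "v < 1 / real N" unfolding v using u Npos pos by (simp add: divide_less_eq field_simps)
    also have "\<dots> < \<delta>" using N \<delta>(1) Npos by (simp add: field_simps)
    finally have "v < \<delta>" .
    moreover have "0 \<le> v" unfolding v using u Npos by simp
    ultimately have "dist v 0 < \<delta>" by (simp add: dist_real_def)
    then have "dist (g v) (g 0) < e" using \<delta>(2) by blast
    moreover have "f t = g v" unfolding f_def v_def u_def s_def by (simp add: tr_def)
    ultimately show "c < f t \<and> f t < d" unfolding e_def dist_real_def by auto
  qed
  ultimately show ?thesis by blast
qed

lemma squeeze:
  assumes "c < d"
  shows "\<exists>h\<in>ThompsonF'. \<forall>t\<in>{p..q}. c < h t \<and> h t < d"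
proof -
  obtain f where f: "f \<in> ThompsonF" "\<forall>t\<in>{p..q}. c < f t \<and> f t < d" using squeeze_F[OF assms] by blast
  obtain h where "h \<in> ThompsonF'" "\<forall>t\<in>{p..q}. h t = f t" using realizable_F[OF f(1)] realizable_def by blast
  then have "h \<in> ThompsonF'" "\<forall>t\<in>{p..q}. c < h t \<and> h t < d" using f(2) by auto
  then show ?thesis by blast
qed

definition fix_out :: "(real \<Rightarrow> real) \<Rightarrow> real set \<Rightarrow> bool" where
  "fix_out f S \<longleftrightarrow> (\<forall>t. t \<notin> S \<longrightarrow> f t = t)"

lemma fix_out_inv: "f \<in> carrier Homeo \<Longrightarrow> fix_out f S \<Longrightarrow> fix_out (hinv f) S"
  unfolding fix_out_def using hinv_fix by blast

lemma fix_out_maps: "f \<in> carrier Homeo \<Longrightarrow> fix_out f S \<Longrightarrow> t \<in> S \<Longrightarrow> f t \<in> S"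
  unfolding fix_out_def by (metis Homeo_inj)

lemma fix_out_mono: "fix_out f S \<Longrightarrow> S \<subseteq> T \<Longrightarrow> fix_out f T"
  unfolding fix_out_def by blast

lemma fix_out_comp: "fix_out f S \<Longrightarrow> fix_out g S \<Longrightarrow> fix_out (f \<circ> g) S"
  unfolding fix_out_def by simp

lemma fix_out_conj:
  assumes "f \<in> carrier Homeo" "fix_out g S"
  shows "fix_out (f \<circ> g \<circ> hinv f) (f ` S)"
  unfolding fix_out_def
proof (intro allI impI)
  fix t assume t: "t \<notin> f ` S"
  have "hinv f t \<notin> S"
  proof
    assume "hinv f t \<in> S"
    then have "f (hinv f t) \<in> f ` S" by blast
    then show False using t Homeo_inv_apply2[OF assms(1)] by simp
  qed
  then show "(f \<circ> g \<circ> hinv f) t = t" using assms(2) Homeo_inv_apply2[OF assms(1)]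
    unfolding fix_out_def by simp
qed

lemma disjoint_commute:
  assumes "f \<in> carrier Homeo" "g \<in> carrier Homeo" "fix_out f S" "fix_out g T" "S \<inter> T = {}"
  shows "f \<circ> g = g \<circ> f"
proof
  fix t
  show "(f \<circ> g) t = (g \<circ> f) t"
  proof (cases "t \<in> S")
    case True
    then have "t \<notin> T" "f t \<in> S" using assms fix_out_maps by blast+
    then have "g t = t" "g (f t) = f t" using assms(4,5) unfolding fix_out_def by blast+
    then show ?thesis by simp
  next
    case False
    then have ft: "f t = t" using assms(3) unfolding fix_out_def by blast
    show ?thesis
    proof (cases "t \<in> T")
      case True
      then have "g t \<in> T" using assms fix_out_maps by blast
      then have "f (g t) = g t" using assms(3,5) unfolding fix_out_def by blast
      then show ?thesis using ft by simp
    next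
      case False
      then show ?thesis using ft assms(4) unfolding fix_out_def by simp
    qed
  qed
qed

lemma Homeo_comp_carrier: "f \<in> carrier Homeo \<Longrightarrow> g \<in> carrier Homeo \<Longrightarrow> f \<circ> g \<in> carrier Homeo"
  using H.m_closed by fastforce

lemma Homeo_hinv_carrier: "f \<in> carrier Homeo \<Longrightarrow> hinv f \<in> carrier Homeo"
  using H.inv_closed by blast

lemma hinv_comp: "f \<in> carrier Homeo \<Longrightarrow> g \<in> carrier Homeo \<Longrightarrow> hinv (f \<circ> g) = hinv g \<circ> hinv f"
  using H.inv_mult_group[of f g] by simp

lemma comm_absorb:
  assumes c: "f \<in> carrier Homeo" "g \<in> carrier Homeo" "e \<in> carrier Homeo"
    and ce: "e \<circ> g = g \<circ> e"
  shows "(f \<circ> e) \<circ> g \<circ> hinv (f \<circ> e) \<circ> hinv g = f \<circ> g \<circ> hinv f \<circ> hinv g"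
proof
  fix t
  have ce': "\<And>s. e (g s) = g (e s)" using ce by (metis comp_apply)
  show "((f \<circ> e) \<circ> g \<circ> hinv (f \<circ> e) \<circ> hinv g) t = (f \<circ> g \<circ> hinv f \<circ> hinv g) t"
    using c by (simp add: hinv_comp ce')
qed

lemma comm_absorb':
  assumes c: "f \<in> carrier Homeo" "g \<in> carrier Homeo" "e \<in> carrier Homeo"
    and ce: "e \<circ> f = f \<circ> e"
  shows "f \<circ> (g \<circ> e) \<circ> hinv f \<circ> hinv (g \<circ> e) = f \<circ> g \<circ> hinv f \<circ> hinv g"
proof
  fix t
  have ce': "\<And>s. e (hinv f s) = hinv f (e s)"
  proof -
    fix s
    have "f (e (hinv f s)) = e (f (hinv f s))" using ce by (metis comp_apply)
    also have "\<dots> = e s" using c by simp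
    finally show "e (hinv f s) = hinv f (e s)" using c Homeo_inv_eq[of f] by metis
  qed
  show "(f \<circ> (g \<circ> e) \<circ> hinv f \<circ> hinv (g \<circ> e)) t = (f \<circ> g \<circ> hinv f \<circ> hinv g) t"
    using c by (simp add: hinv_comp ce')
qed

lemma conj_comm:
  assumes c: "h \<in> carrier Homeo" "x \<in> carrier Homeo" "y \<in> carrier Homeo"
  shows "(h \<circ> x \<circ> hinv h) \<circ> (h \<circ> y \<circ> hinv h) \<circ> hinv (h \<circ> x \<circ> hinv h) \<circ> hinv (h \<circ> y \<circ> hinv h)
    = h \<circ> (x \<circ> y \<circ> hinv x \<circ> hinv y) \<circ> hinv h"
proof
  fix t
  have hh: "hinv (hinv h) = h" using c H.inv_inv by blast
  show "((h \<circ> x \<circ> hinv h) \<circ> (h \<circ> y \<circ> hinv h) \<circ> hinv (h \<circ> x \<circ> hinv h) \<circ> hinv (h \<circ> y \<circ> hinv h)) t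
    = (h \<circ> (x \<circ> y \<circ> hinv x \<circ> hinv y) \<circ> hinv h) t"
    using c by (simp add: hinv_comp Homeo_comp_carrier Homeo_hinv_carrier hh)
qed

context
  fixes \<Gamma> :: "(real \<Rightarrow> real) set"
  assumes sg: "subgroup \<Gamma> Homeo" and cs: "\<forall>f\<in>\<Gamma>. compactly_supported f"
    and FG: "ThompsonF' \<subseteq> \<Gamma>"
begin

lemma G_carrier: "f \<in> \<Gamma> \<Longrightarrow> f \<in> carrier Homeo"
  by (rule subgroup.mem_carrier[OF sg])

lemma G_comp: "f \<in> \<Gamma> \<Longrightarrow> g \<in> \<Gamma> \<Longrightarrow> f \<circ> g \<in> \<Gamma>"
  using subgroup.m_closed[OF sg, of f g] by simp

lemma G_hinv: "f \<in> \<Gamma> \<Longrightarrow> hinv f \<in> \<Gamma>"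
  by (rule subgroup.m_inv_closed[OF sg])

lemma G_sub: "\<Gamma> \<subseteq> carrier Homeo" using G_carrier by blast

lemma D_sub: "subgroup (derived Homeo \<Gamma>) Homeo"
  by (rule H.derived_is_subgroup[OF G_sub])

lemma D_G: "derived Homeo \<Gamma> \<subseteq> \<Gamma>"
  by (rule H.derived_incl[OF subset_refl sg])

lemma comm_D: assumes x: "x \<in> \<Gamma>" and y: "y \<in> \<Gamma>"
  shows "x \<circ> y \<circ> hinv x \<circ> hinv y \<in> derived Homeo \<Gamma>"
  unfolding derived_def
  apply (rule generate.incl)
  apply (rule UN_I[OF x], rule UN_I[OF y])
  by simp

lemma D_comp: "f \<in> derived Homeo \<Gamma> \<Longrightarrow> g \<in> derived Homeo \<Gamma> \<Longrightarrow> f \<circ> g \<in> derived Homeo \<Gamma>"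
  using subgroup.m_closed[OF D_sub, of f g] by simp

lemma D_hinv: "f \<in> derived Homeo \<Gamma> \<Longrightarrow> hinv f \<in> derived Homeo \<Gamma>"
  by (rule subgroup.m_inv_closed[OF D_sub])

lemma D_carrier: "f \<in> derived Homeo \<Gamma> \<Longrightarrow> f \<in> carrier Homeo"
  by (rule subgroup.mem_carrier[OF D_sub])

lemma G_bounded: "f \<in> \<Gamma> \<Longrightarrow> \<exists>R\<ge>0. fix_out f {-R..R}"
proof -
  assume "f \<in> \<Gamma>"
  then have "compact (closure {x. f x \<noteq> x})" using cs compactly_supported_def by blast
  then obtain B where B: "\<forall>x\<in>closure {x. f x \<noteq> x}. \<bar>x\<bar> \<le> B"
    using compact_imp_bounded bounded_real by meson
  have "fix_out f {-(max B 0)..max B 0}"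
    unfolding fix_out_def
  proof (intro allI impI)
    fix t assume "t \<notin> {-(max B 0)..max B 0}"
    then have "\<bar>t\<bar> > B" by auto
    then have "t \<notin> closure {x. f x \<noteq> x}"
    proof (intro notI)
      assume "t \<in> closure {x. f x \<noteq> x}"
      then have "\<bar>t\<bar> \<le> B" using B by blast
      then show False using \<open>\<bar>t\<bar> > B\<close> by linarith
    qed
    then show "f t = t"
    proof (rule contrapos_np)
      assume "f t \<noteq> t"
      then have "t \<in> {x. f x \<noteq> x}" by simp
      then show "t \<in> closure {x. f x \<noteq> x}" by (rule subsetD[OF closure_subset])
    qed
  qed
  then show ?thesis by (intro exI[of _ "max B 0"]) simp
qed

lemma G_squeeze: "c < d \<Longrightarrow> \<exists>h\<in>\<Gamma>. \<forall>t\<in>{p..q}. c < h t \<and> h t < d"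
  using squeeze FG by blast

lemma conj_fix:
  assumes "g \<in> \<Gamma>" "h \<in> \<Gamma>" "fix_out h S" "\<forall>t\<in>S. c < g t \<and> g t < d"
  shows "fix_out (g \<circ> hinv h \<circ> hinv g) {c<..<d}"
proof -
  have "fix_out (g \<circ> hinv h \<circ> hinv g) (g ` S)"
    using fix_out_conj[OF G_carrier[OF assms(1)] fix_out_inv[OF G_carrier[OF assms(2)] assms(3)]] .
  moreover have "g ` S \<subseteq> {c<..<d}" using assms(4) by auto
  ultimately show ?thesis using fix_out_mono by blast
qed

lemma upgrade:
  assumes h: "h \<in> \<Gamma>"
  shows "\<exists>h'\<in>derived Homeo \<Gamma>. \<forall>t\<in>{-S..S}. h' t = h t"
proof -
  obtain R where R: "R \<ge> 0" "fix_out h {-R..R}" using G_bounded[OF h] by blast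
  define S' where "S' = max R S"
  have hS: "fix_out h {-S'..S'}" using R fix_out_mono unfolding S'_def by fastforce
  obtain g where g: "g \<in> \<Gamma>" "\<forall>t\<in>{-S'..S'}. S' + 1 < g t \<and> g t < S' + 2"
    using G_squeeze[where c="S' + 1" and d="S' + 2" and p="-S'" and q="S'"] by auto
  have e: "fix_out (g \<circ> hinv h \<circ> hinv g) {S' + 1<..<S' + 2}" by (rule conj_fix[OF g(1) h hS g(2)])
  have "h \<circ> g \<circ> hinv h \<circ> hinv g \<in> derived Homeo \<Gamma>" by (rule comm_D[OF h g(1)])
  moreover have "\<forall>t\<in>{-S..S}. (h \<circ> g \<circ> hinv h \<circ> hinv g) t = h t"
  proof
    fix t assume "t \<in> {-S..S}"
    then have "t \<notin> {S' + 1<..<S' + 2}" unfolding S'_def by auto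
    then have "(g \<circ> hinv h \<circ> hinv g) t = t" using e unfolding fix_out_def by blast
    then show "(h \<circ> g \<circ> hinv h \<circ> hinv g) t = h t" by simp
  qed
  ultimately show ?thesis by blast
qed

lemma D_nontriv: "\<exists>k\<in>derived Homeo \<Gamma>. k \<noteq> id"
proof -
  obtain h where h: "h \<in> \<Gamma>" "\<forall>t\<in>{0..0}. 2 < h t \<and> h t < 3" using G_squeeze[where c=2 and d=3 and p=0 and q=0] by auto
  have h0: "h 0 \<noteq> 0" using h(2) by auto
  obtain R where R: "R \<ge> 0" "fix_out h {-R..R}" using G_bounded[OF h(1)] by blast
  obtain g where g: "g \<in> \<Gamma>" "\<forall>t\<in>{-R..R}. R + 1 < g t \<and> g t < R + 2"
    using G_squeeze[where c="R + 1" and d="R + 2" and p="-R" and q="R"] by auto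
  have e: "fix_out (g \<circ> hinv h \<circ> hinv g) {R + 1<..<R + 2}" by (rule conj_fix[OF g(1) h(1) R(2) g(2)])
  have "(g \<circ> hinv h \<circ> hinv g) 0 = 0" using e R(1) unfolding fix_out_def by auto
  then have "(h \<circ> g \<circ> hinv h \<circ> hinv g) 0 \<noteq> 0" using h0 by simp
  then have "h \<circ> g \<circ> hinv h \<circ> hinv g \<noteq> id"
  proof (rule contrapos_nn)
    assume "h \<circ> g \<circ> hinv h \<circ> hinv g = id"
    from fun_cong[OF this, of 0] show "(h \<circ> g \<circ> hinv h \<circ> hinv g) 0 = 0" by (simp only: id_apply)
  qed
  then show ?thesis using comm_D[OF h(1) g(1)] by blast
qed

abbreviation "GD \<equiv> Homeo\<lparr>carrier := derived Homeo \<Gamma>\<rparr>"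

lemma GD_group: "group GD"
  by (rule subgroup.subgroup_is_group[OF D_sub group_Homeo])

lemma N_props:
  assumes N: "N \<lhd> GD"
  shows "N \<subseteq> derived Homeo \<Gamma>" "id \<in> N"
    "\<And>a b. a \<in> N \<Longrightarrow> b \<in> N \<Longrightarrow> a \<circ> b \<in> N"
    "\<And>a. a \<in> N \<Longrightarrow> hinv a \<in> N"
    "\<And>x a. x \<in> derived Homeo \<Gamma> \<Longrightarrow> a \<in> N \<Longrightarrow> x \<circ> a \<circ> hinv x \<in> N"
proof -
  have ni: "subgroup N GD \<and> (\<forall>x\<in>carrier GD. \<forall>h\<in>N. x \<otimes>\<^bsub>GD\<^esub> h \<otimes>\<^bsub>GD\<^esub> inv\<^bsub>GD\<^esub> x \<in> N)"
    using group.normal_inv_iff[OF GD_group] N by blast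
  then have sN: "subgroup N GD" by blast
  show ND: "N \<subseteq> derived Homeo \<Gamma>" using subgroup.subset[OF sN] by simp
  show "id \<in> N" using subgroup.one_closed[OF sN] by simp
  show "\<And>a b. a \<in> N \<Longrightarrow> b \<in> N \<Longrightarrow> a \<circ> b \<in> N"
    using subgroup.m_closed[OF sN] by simp
  have invc: "\<And>a. a \<in> derived Homeo \<Gamma> \<Longrightarrow> inv\<^bsub>GD\<^esub> a = hinv a"
    using H.m_inv_consistent[OF D_sub] by blast
  show "\<And>a. a \<in> N \<Longrightarrow> hinv a \<in> N"
  proof -
    fix a assume a: "a \<in> N"
    then have "inv\<^bsub>GD\<^esub> a \<in> N" using subgroup.m_inv_closed[OF sN] by blast
    then show "hinv a \<in> N" using invc a ND by auto
  qed
  show "\<And>x a. x \<in> derived Homeo \<Gamma> \<Longrightarrow> a \<in> N \<Longrightarrow> x \<circ> a \<circ> hinv x \<in> N"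
  proof -
    fix x a assume x: "x \<in> derived Homeo \<Gamma>" and a: "a \<in> N"
    then have "x \<otimes>\<^bsub>GD\<^esub> a \<otimes>\<^bsub>GD\<^esub> inv\<^bsub>GD\<^esub> x \<in> N" using ni by simp
    then show "x \<circ> a \<circ> hinv x \<in> N" using invc[OF x] by simp
  qed
qed

lemma pointwise_comm: "f \<circ> g = g \<circ> f \<Longrightarrow> f (g s) = g (f s)"
  by (metis comp_apply)

lemma D_in_N:
  assumes N: "N \<lhd> GD" and n: "n \<in> N" "n \<noteq> id"
  shows "derived Homeo \<Gamma> \<subseteq> N"
proof -
  note NP = N_props[OF N]
  have nD: "n \<in> derived Homeo \<Gamma>" using n NP(1) by blast
  have nc: "n \<in> carrier Homeo" using D_carrier[OF nD] .
  obtain t0 where t0: "n t0 \<noteq> t0" using n(2) by (auto simp: fun_eq_iff)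
  define e where "e = \<bar>n t0 - t0\<bar> / 3"
  have e0: "e > 0" unfolding e_def using t0 by simp
  obtain \<delta> where \<delta>: "\<delta> > 0" "\<forall>x'. dist x' t0 < \<delta> \<longrightarrow> dist (n x') (n t0) < e"
    using Homeo_cont[OF nc] e0 unfolding continuous_on_iff by blast
  define r where "r = min \<delta> e"
  define U where "U = {t0 - r<..<t0 + r}"
  have r0: "r > 0" unfolding r_def using \<delta> e0 by simp
  have nU: "\<forall>s\<in>U. n s \<notin> U"
  proof
    fix s assume s: "s \<in> U"
    then have "dist s t0 < \<delta>" unfolding U_def r_def dist_real_def by auto
    then have "\<bar>n s - n t0\<bar> < e" using \<delta>(2) unfolding dist_real_def by blast
    moreover have "\<bar>n t0 - t0\<bar> \<le> \<bar>n t0 - n s\<bar> + \<bar>n s - t0\<bar>"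
      using abs_triangle_ineq[of "n t0 - n s" "n s - t0"] by simp
    moreover have "\<bar>n t0 - n s\<bar> = \<bar>n s - n t0\<bar>" by (rule abs_minus_commute)
    moreover have "r \<le> e" unfolding r_def by simp
    moreover have "3 * e = \<bar>n t0 - t0\<bar>" unfolding e_def by simp
    ultimately have "\<bar>n s - t0\<bar> \<ge> r" using e0 by linarith
    then show "n s \<notin> U" unfolding U_def by auto
  qed
  have disj: "n ` U \<inter> U = {}" using nU by blast
  have claimA: "\<And>u v. u \<in> derived Homeo \<Gamma> \<Longrightarrow> v \<in> derived Homeo \<Gamma> \<Longrightarrow> fix_out u U \<Longrightarrow> fix_out v U
      \<Longrightarrow> u \<circ> v \<circ> hinv u \<circ> hinv v \<in> N"
  proof -
    fix u v assume u: "u \<in> derived Homeo \<Gamma>" and v: "v \<in> derived Homeo \<Gamma>"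
      and fu: "fix_out u U" and fv: "fix_out v U"
    have uc: "u \<in> carrier Homeo" and vc: "v \<in> carrier Homeo" using u v D_carrier by auto
    define c' where "c' = n \<circ> hinv u \<circ> hinv n"
    have c'c: "c' \<in> carrier Homeo" unfolding c'_def
      using Homeo_comp_carrier Homeo_hinv_carrier nc uc by metis
    have fc': "fix_out c' (n ` U)" unfolding c'_def by (rule fix_out_conj[OF nc fix_out_inv[OF uc fu]])
    have com: "c' \<circ> v = v \<circ> c'" by (rule disjoint_commute[OF c'c vc fc' fv disj])
    have w: "u \<circ> n \<circ> hinv u \<circ> hinv n \<in> N"
      using NP(3)[OF NP(5)[OF u n(1)] NP(4)[OF n(1)]] .
    have weq: "u \<circ> n \<circ> hinv u \<circ> hinv n = u \<circ> c'" unfolding c'_def by (simp add: comp_assoc)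
    have wN: "u \<circ> c' \<in> N" using w weq by simp
    have "(u \<circ> c') \<circ> (v \<circ> hinv (u \<circ> c') \<circ> hinv v) \<in> N"
      using NP(3)[OF wN NP(5)[OF v NP(4)[OF wN]]] .
    moreover have "(u \<circ> c') \<circ> (v \<circ> hinv (u \<circ> c') \<circ> hinv v) = (u \<circ> c') \<circ> v \<circ> hinv (u \<circ> c') \<circ> hinv v"
      by (simp add: comp_assoc)
    ultimately show "u \<circ> v \<circ> hinv u \<circ> hinv v \<in> N"
      using comm_absorb[OF uc vc c'c com] by simp
  qed
  have claimB: "\<And>x y. x \<in> \<Gamma> \<Longrightarrow> y \<in> \<Gamma> \<Longrightarrow> x \<circ> y \<circ> hinv x \<circ> hinv y \<in> N"
  proof -
    fix x y assume x: "x \<in> \<Gamma>" and y: "y \<in> \<Gamma>"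
    have xc: "x \<in> carrier Homeo" and yc: "y \<in> carrier Homeo" using x y G_carrier by auto
    obtain Rx where Rx: "Rx \<ge> 0" "fix_out x {-Rx..Rx}" using G_bounded[OF x] by blast
    obtain Ry where Ry: "Ry \<ge> 0" "fix_out y {-Ry..Ry}" using G_bounded[OF y] by blast
    define R where "R = max Rx Ry"
    have R0: "R \<ge> 0" unfolding R_def using Rx by simp
    have fx: "fix_out x {-R..R}" using fix_out_mono[OF Rx(2)] unfolding R_def by auto
    have fy: "fix_out y {-R..R}" using fix_out_mono[OF Ry(2)] unfolding R_def by auto
    obtain g1 where g1: "g1 \<in> \<Gamma>" "\<forall>t\<in>{-R..R}. R + 1 < g1 t \<and> g1 t < R + 2"
      using G_squeeze[where c="R + 1" and d="R + 2" and p="-R" and q="R"] by auto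
    obtain g2 where g2: "g2 \<in> \<Gamma>" "\<forall>t\<in>{-R..R}. R + 3 < g2 t \<and> g2 t < R + 4"
      using G_squeeze[where c="R + 3" and d="R + 4" and p="-R" and q="R"] by auto
    define e1 where "e1 = g1 \<circ> hinv x \<circ> hinv g1"
    define e2 where "e2 = g2 \<circ> hinv y \<circ> hinv g2"
    have fe1: "fix_out e1 {R + 1<..<R + 2}" unfolding e1_def by (rule conj_fix[OF g1(1) x fx g1(2)])
    have fe2: "fix_out e2 {R + 3<..<R + 4}" unfolding e2_def by (rule conj_fix[OF g2(1) y fy g2(2)])
    have e1c: "e1 \<in> carrier Homeo" unfolding e1_def
      using Homeo_comp_carrier Homeo_hinv_carrier G_carrier[OF g1(1)] xc by metis
    have e2c: "e2 \<in> carrier Homeo" unfolding e2_def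
      using Homeo_comp_carrier Homeo_hinv_carrier G_carrier[OF g2(1)] yc by metis
    have x'D: "x \<circ> e1 \<in> derived Homeo \<Gamma>"
      using comm_D[OF x g1(1)] unfolding e1_def by (simp add: comp_assoc)
    have y'D: "y \<circ> e2 \<in> derived Homeo \<Gamma>"
      using comm_D[OF y g2(1)] unfolding e2_def by (simp add: comp_assoc)
    have c1y: "e1 \<circ> y = y \<circ> e1" by (rule disjoint_commute[OF e1c yc fe1 fy]) auto
    have c12: "e1 \<circ> e2 = e2 \<circ> e1" by (rule disjoint_commute[OF e1c e2c fe1 fe2]) auto
    have c2x: "e2 \<circ> x = x \<circ> e2" by (rule disjoint_commute[OF e2c xc fe2 fx]) auto
    have c1y2: "e1 \<circ> (y \<circ> e2) = (y \<circ> e2) \<circ> e1"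
      using pointwise_comm[OF c1y] pointwise_comm[OF c12] by (simp add: fun_eq_iff)
    have ye2c: "y \<circ> e2 \<in> carrier Homeo" using Homeo_comp_carrier yc e2c by blast
    have keq: "(x \<circ> e1) \<circ> (y \<circ> e2) \<circ> hinv (x \<circ> e1) \<circ> hinv (y \<circ> e2) = x \<circ> y \<circ> hinv x \<circ> hinv y"
      using comm_absorb[OF xc ye2c e1c c1y2] comm_absorb'[OF xc yc e2c c2x] by simp
    define L where "L = {-R..R + 4}"
    have fx': "fix_out (x \<circ> e1) L" unfolding L_def
      by (rule fix_out_comp[OF fix_out_mono[OF fx] fix_out_mono[OF fe1]]) (use R0 in auto)
    have fy': "fix_out (y \<circ> e2) L" unfolding L_def
      by (rule fix_out_comp[OF fix_out_mono[OF fy] fix_out_mono[OF fe2]]) (use R0 in auto)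
    obtain h where h: "h \<in> \<Gamma>" "\<forall>t\<in>{-R..R + 4}. t0 - r < h t \<and> h t < t0 + r"
      using G_squeeze[where c="t0 - r" and d="t0 + r" and p="-R" and q="R + 4"] r0 by auto
    obtain h' where h': "h' \<in> derived Homeo \<Gamma>" "\<forall>t\<in>{-(R + 4)..R + 4}. h' t = h t"
      using upgrade[OF h(1)] by blast
    have h'c: "h' \<in> carrier Homeo" using D_carrier[OF h'(1)] .
    have h'L: "h' ` L \<subseteq> U"
    proof
      fix s assume "s \<in> h' ` L"
      then obtain t where t: "t \<in> L" "s = h' t" by blast
      then have "t \<in> {-(R + 4)..R + 4}" "t \<in> {-R..R + 4}" unfolding L_def using R0 by auto
      then show "s \<in> U" using h'(2) h(2) t(2) unfolding U_def by auto
    qed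
    define u where "u = h' \<circ> (x \<circ> e1) \<circ> hinv h'"
    define v where "v = h' \<circ> (y \<circ> e2) \<circ> hinv h'"
    have uD: "u \<in> derived Homeo \<Gamma>" unfolding u_def using D_comp D_hinv h'(1) x'D by blast
    have vD: "v \<in> derived Homeo \<Gamma>" unfolding v_def using D_comp D_hinv h'(1) y'D by blast
    have fu: "fix_out u U" unfolding u_def using fix_out_mono[OF fix_out_conj[OF h'c fx'] h'L] .
    have fv: "fix_out v U" unfolding v_def using fix_out_mono[OF fix_out_conj[OF h'c fy'] h'L] .
    have x'c: "x \<circ> e1 \<in> carrier Homeo" using Homeo_comp_carrier xc e1c by blast
    have "u \<circ> v \<circ> hinv u \<circ> hinv v \<in> N" by (rule claimA[OF uD vD fu fv])
    also have "u \<circ> v \<circ> hinv u \<circ> hinv v = h' \<circ> (x \<circ> y \<circ> hinv x \<circ> hinv y) \<circ> hinv h'"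
      unfolding u_def v_def conj_comm[OF h'c x'c ye2c] keq ..
    finally have K: "h' \<circ> (x \<circ> y \<circ> hinv x \<circ> hinv y) \<circ> hinv h' \<in> N" .
    have "hinv h' \<circ> (h' \<circ> (x \<circ> y \<circ> hinv x \<circ> hinv y) \<circ> hinv h') \<circ> hinv (hinv h') \<in> N"
      by (rule NP(5)[OF D_hinv[OF h'(1)] K])
    moreover have "hinv (hinv h') = h'" using H.inv_inv h'c by blast
    moreover have "hinv h' \<circ> (h' \<circ> (x \<circ> y \<circ> hinv x \<circ> hinv y) \<circ> hinv h') \<circ> h' = x \<circ> y \<circ> hinv x \<circ> hinv y"
      using h'c by (simp add: fun_eq_iff)
    ultimately show "x \<circ> y \<circ> hinv x \<circ> hinv y \<in> N" by simp
  qed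
  show ?thesis
  proof
    fix k assume "k \<in> derived Homeo \<Gamma>"
    then have "k \<in> generate Homeo (derived_set Homeo \<Gamma>)" unfolding derived_def .
    then show "k \<in> N"
    proof (induction rule: generate.induct)
      case one show ?case unfolding Homeo_one by (rule NP(2))
    next
      case (incl h)
      then obtain x y where xy: "x \<in> \<Gamma>" "y \<in> \<Gamma>" "h = x \<circ> y \<circ> hinv x \<circ> hinv y" by auto
      have "x \<circ> y \<circ> hinv x \<circ> hinv y \<in> N" by (rule claimB[OF xy(1,2)])
      then show ?case unfolding xy(3) .
    next
      case (inv h)
      then obtain x y where xy: "x \<in> \<Gamma>" "y \<in> \<Gamma>" "h = x \<circ> y \<circ> hinv x \<circ> hinv y" by auto
      have "hinv (x \<circ> y \<circ> hinv x \<circ> hinv y) \<in> N" by (rule NP(4)[OF claimB[OF xy(1,2)]])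
      then show ?case unfolding xy(3) .
    next
      case (eng h1 h2)
      then show ?case unfolding Homeo_mult using NP(3) by blast
    qed
  qed
qed

lemma simple_main: "simple GD"
  unfolding simple_def
proof (intro conjI allI impI)
  show "group GD" by (rule GD_group)
  show "carrier GD \<noteq> {\<one>\<^bsub>GD\<^esub>}" using D_nontriv by auto
next
  fix N assume N: "N \<lhd> GD"
  show "N = {\<one>\<^bsub>GD\<^esub>} \<or> N = carrier GD"
  proof (cases "\<exists>n\<in>N. n \<noteq> id")
    case True
    then obtain n where "n \<in> N" "n \<noteq> id" by blast
    then have "derived Homeo \<Gamma> \<subseteq> N" using D_in_N[OF N] by blast
    then show ?thesis using N_props(1)[OF N] by auto
  next
    case False
    then show ?thesis using N_props(2)[OF N] by auto
  qed
qed

end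

theorem mainTheorem8:
  fixes \<Gamma> :: "(real \<Rightarrow> real) set"
  assumes "subgroup \<Gamma> Homeo"
    and "\<forall>f\<in>\<Gamma>. compactly_supported f"
    and "ThompsonF' \<subseteq> \<Gamma>"
  shows "simple (Homeo\<lparr>carrier := derived Homeo \<Gamma>\<rparr>)"
  using simple_main[OF assms] .

end
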